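(* Under the standing setup: (i) if $\delta_B\ge 0$, then $D\in[D_{NM},D^+_{MOB}]$; (ii) if $\delta_B\le 0$, then $D\in[D^-_{MOB},D_{NM}]$; (iii) the bounds in (i) and (ii) are sharp under the respective sign assumption (absent additional information).
   Context: Let $(X,Y,N)$ be a random triple with $X\in\{0,1\}$, $Y$ real-valued, $N$ taking values in a finite set $\mathcal N$. Write $p_n=\Pr(N=n)$, $X_n=\mathbb E[X\mid N=n]$, $Y_n=\mathbb E[Y\mid N=n]$, $X_N=\mathbb E[X\mid N]$, $Y_N=\mathbb E[Y\mid N]$. Assume some $n$ has $p_n>0$ and $X_n\in(0,1)$, and fix reals $\underline Y\le\overline Y$ with $\mathbb E[Y\mid X=x,N=n]\in[\underline Y,\overline Y]$ whenever $\Pr(X=x,N=n)>0$. $D=\mathbb E[Y\mid X=1]-\mathbb E[Y\mid X=0]$; $\delta_B=\mathbb E[\mathrm{Cov}(Y,X\mid N)]$; $D_{NM}=\mathbb E[X_NY_N]/\mathbb E[X_N]-\mathbb E[(1-X_N)Y_N]/\mathbb E[1-X_N]$; $D^+_{MOB}=\big(\mathbb E[\min\{Y_N-\underline Y(1-X_N),\overline Y X_N\}]-\mathbb E[X]\mathbb E[Y]\big)/\mathrm{Var}(X)$, $D^-_{MOB}=\big(\mathbb E[Y](1-\mathbb E[X])-\mathbb E[\min\{Y_N-\underline Y X_N,\overline Y(1-X_N)\}]\big)/\mathrm{Var}(X)$. Sharpness under an assumption $\mathcal A$: the parameter lies in the interval for every joint distribution satisfying the standing assumptions and $\mathcal A$,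 and every value in the interval is attained by some joint distribution of $(X,Y,N)$ with the same observed $(p_n,X_n,Y_n)_n$, satisfying the standing bound and $\mathcal A$. *)

theory Defs
  imports "HOL-Probability.Probability"
begin

definition cexp :: "'a measure \<Rightarrow> ('a \<Rightarrow> real) \<Rightarrow> 'a set \<Rightarrow> real" where
  "cexp M Z A = (\<integral>\<omega>. indicator A \<omega> * Z \<omega> \<partial>M) / measure M A"

definition evN :: "'a measure \<Rightarrow> ('a \<Rightarrow> 'n) \<Rightarrow> 'n \<Rightarrow> 'a set" where
  "evN M N n = {\<omega> \<in> space M. N \<omega> = n}"

definition evXN :: "'a measure \<Rightarrow> ('a \<Rightarrow> real) \<Rightarrow> ('a \<Rightarrow> 'n) \<Rightarrow> real \<Rightarrow> 'n \<Rightarrow> 'a set" where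
  "evXN M X N x n = {\<omega> \<in> space M. X \<omega> = x \<and> N \<omega> = n}"

definition evX :: "'a measure \<Rightarrow> ('a \<Rightarrow> real) \<Rightarrow> real \<Rightarrow> 'a set" where
  "evX M X x = {\<omega> \<in> space M. X \<omega> = x}"

definition pN :: "'a measure \<Rightarrow> ('a \<Rightarrow> 'n) \<Rightarrow> 'n \<Rightarrow> real" where
  "pN M N n = measure M (evN M N n)"

definition condN :: "'a measure \<Rightarrow> ('a \<Rightarrow> 'n) \<Rightarrow> ('a \<Rightarrow> real) \<Rightarrow> 'n \<Rightarrow> real" where
  "condN M N Z n = cexp M Z (evN M N n)"

definition condRV :: "'a measure \<Rightarrow> ('a \<Rightarrow> 'n) \<Rightarrow> ('a \<Rightarrow> real) \<Rightarrow> 'a \<Rightarrow> real" where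
  "condRV M N Z \<omega> = condN M N Z (N \<omega>)"

definition Expect :: "'a measure \<Rightarrow> ('a \<Rightarrow> real) \<Rightarrow> real" where
  "Expect M Z = (\<integral>\<omega>. Z \<omega> \<partial>M)"

definition Var :: "'a measure \<Rightarrow> ('a \<Rightarrow> real) \<Rightarrow> real" where
  "Var M Z = (\<integral>\<omega>. (Z \<omega> - Expect M Z)\<^sup>2 \<partial>M)"

definition standing :: "'a measure \<Rightarrow> ('a \<Rightarrow> real) \<Rightarrow> ('a \<Rightarrow> real) \<Rightarrow> ('a \<Rightarrow> 'n::finite) \<Rightarrow> real \<Rightarrow> real \<Rightarrow> bool" where
  "standing M X Y N Ylo Yhi \<longleftrightarrow>
     prob_space M \<and> X \<in> borel_measurable M \<and> (\<forall>\<omega>\<in>space M. X \<omega> \<in> {0,1}) \<and>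
     integrable M Y \<and> N \<in> measurable M (count_space UNIV) \<and>
     (\<exists>n. pN M N n > 0 \<and> 0 < condN M N X n \<and> condN M N X n < 1) \<and>
     Ylo \<le> Yhi \<and>
     (\<forall>x\<in>{0,1}. \<forall>n. measure M (evXN M X N x n) > 0 \<longrightarrow>
        cexp M Y (evXN M X N x n) \<in> {Ylo..Yhi})"

definition D :: "'a measure \<Rightarrow> ('a \<Rightarrow> real) \<Rightarrow> ('a \<Rightarrow> real) \<Rightarrow> real" where
  "D M X Y = cexp M Y (evX M X 1) - cexp M Y (evX M X 0)"

definition deltaB :: "'a measure \<Rightarrow> ('a \<Rightarrow> real) \<Rightarrow> ('a \<Rightarrow> real) \<Rightarrow> ('a \<Rightarrow> 'n) \<Rightarrow> real" where
  "deltaB M X Y N = Expect M (\<lambda>\<omega>. condRV M N (\<lambda>\<omega>'. X \<omega>' * Y \<omega>') \<omega>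
                              - condRV M N X \<omega> * condRV M N Y \<omega>)"

definition DNM :: "'a measure \<Rightarrow> ('a \<Rightarrow> real) \<Rightarrow> ('a \<Rightarrow> real) \<Rightarrow> ('a \<Rightarrow> 'n) \<Rightarrow> real" where
  "DNM M X Y N =
     Expect M (\<lambda>\<omega>. condRV M N X \<omega> * condRV M N Y \<omega>) / Expect M (condRV M N X)
   - Expect M (\<lambda>\<omega>. (1 - condRV M N X \<omega>) * condRV M N Y \<omega>) / Expect M (\<lambda>\<omega>. 1 - condRV M N X \<omega>)"

definition DMOBp :: "'a measure \<Rightarrow> ('a \<Rightarrow> real) \<Rightarrow> ('a \<Rightarrow> real) \<Rightarrow> ('a \<Rightarrow> 'n) \<Rightarrow> real \<Rightarrow> real \<Rightarrow> real" where
  "DMOBp M X Y N Ylo Yhi =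
     (Expect M (\<lambda>\<omega>. min (condRV M N Y \<omega> - Ylo * (1 - condRV M N X \<omega>)) (Yhi * condRV M N X \<omega>))
      - Expect M X * Expect M Y) / Var M X"

definition DMOBm :: "'a measure \<Rightarrow> ('a \<Rightarrow> real) \<Rightarrow> ('a \<Rightarrow> real) \<Rightarrow> ('a \<Rightarrow> 'n) \<Rightarrow> real \<Rightarrow> real \<Rightarrow> real" where
  "DMOBm M X Y N Ylo Yhi =
     (Expect M Y * (1 - Expect M X)
      - Expect M (\<lambda>\<omega>. min (condRV M N Y \<omega> - Ylo * condRV M N X \<omega>) (Yhi * (1 - condRV M N X \<omega>))))
     / Var M X"

definition same_obs :: "'a measure \<Rightarrow> ('a \<Rightarrow> real) \<Rightarrow> ('a \<Rightarrow> real) \<Rightarrow> ('a \<Rightarrow> 'n) \<Rightarrow>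
                        'b measure \<Rightarrow> ('b \<Rightarrow> real) \<Rightarrow> ('b \<Rightarrow> real) \<Rightarrow> ('b \<Rightarrow> 'n) \<Rightarrow> bool" where
  "same_obs M X Y N M' X' Y' N' \<longleftrightarrow>
     (\<forall>n. pN M' N' n = pN M N n \<and> condN M' N' X' n = condN M N X n \<and> condN M' N' Y' n = condN M N Y n)"

end

theory Submission
  imports Defs
begin


definition "cP M X N x n = measure M (evXN M X N x n)"
definition "cS M X Y N x n = (\<integral>\<omega>. indicator (evXN M X N x n) \<omega> * Y \<omega> \<partial>M)"

lemma min_mult_pos: "(c::real) > 0 \<Longrightarrow> min a b * c = min (a*c) (b*c)"
  by (simp add: min_def)

lemma pern1:
  fixes P1 P0 S1 S0 Ylo Yhi :: real
  assumes "P1 \<ge> 0" "P0 \<ge> 0" "P1 = 0 \<Longrightarrow> S1 = 0" "P0 = 0 \<Longrightarrow> S0 = 0"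
  shows "(S1 / (P1+P0) - P1/(P1+P0) * ((S1+S0)/(P1+P0))) * (P1+P0) = S1 - P1*(S1+S0)/(P1+P0)"
proof (cases "P1 + P0 = 0")
  case True
  then have "P1 = 0" "P0 = 0" using assms by linarith+
  then show ?thesis using assms by simp
next
  case False
  then have pos: "P1 + P0 > 0" using assms by linarith
  obtain p where p: "p = P1 + P0" by blast
  then have P0e: "P0 = p - P1" by simp
  have "p > 0" using pos p by simp
  have pp: "P1 + (p - P1) = p" by simp
  show ?thesis using \<open>0 < p\<close> unfolding P0e add.commute[of P1 "p - P1"] diff_add_cancel
    by (simp add: field_simps)
qed

lemma pern2:
  fixes P1 P0 S1 S0 Ylo Yhi :: real
  assumes "P1 \<ge> 0" "P0 \<ge> 0" "P1 = 0 \<Longrightarrow> S1 = 0" "P0 = 0 \<Longrightarrow> S0 = 0"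
  shows "(P1/(P1+P0) * ((S1+S0)/(P1+P0))) * (P1+P0) = P1*(S1+S0)/(P1+P0)"
proof (cases "P1 + P0 = 0")
  case True
  then have "P1 = 0" "P0 = 0" using assms by linarith+
  then show ?thesis using assms by simp
next
  case False
  then have pos: "P1 + P0 > 0" using assms by linarith
  obtain p where p: "p = P1 + P0" by blast
  then have P0e: "P0 = p - P1" by simp
  have "p > 0" using pos p by simp
  have pp: "P1 + (p - P1) = p" by simp
  show ?thesis using \<open>0 < p\<close> unfolding P0e add.commute[of P1 "p - P1"] diff_add_cancel
    by (simp add: field_simps)
qed

lemma pern3:
  fixes P1 P0 S1 S0 Ylo Yhi :: real
  assumes "P1 \<ge> 0" "P0 \<ge> 0" "P1 = 0 \<Longrightarrow> S1 = 0" "P0 = 0 \<Longrightarrow> S0 = 0"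
  shows "P1/(P1+P0) * (P1+P0) = P1"
proof (cases "P1 + P0 = 0")
  case True
  then have "P1 = 0" "P0 = 0" using assms by linarith+
  then show ?thesis using assms by simp
next
  case False
  then have pos: "P1 + P0 > 0" using assms by linarith
  obtain p where p: "p = P1 + P0" by blast
  then have P0e: "P0 = p - P1" by simp
  have "p > 0" using pos p by simp
  have pp: "P1 + (p - P1) = p" by simp
  show ?thesis using \<open>0 < p\<close> unfolding P0e add.commute[of P1 "p - P1"] diff_add_cancel
    by (simp add: field_simps)
qed

lemma pern4:
  fixes P1 P0 S1 S0 Ylo Yhi :: real
  assumes "P1 \<ge> 0" "P0 \<ge> 0" "P1 = 0 \<Longrightarrow> S1 = 0" "P0 = 0 \<Longrightarrow> S0 = 0"
  shows "((1 - P1/(P1+P0)) * ((S1+S0)/(P1+P0))) * (P1+P0) = (S1+S0) - P1*(S1+S0)/(P1+P0)"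
proof (cases "P1 + P0 = 0")
  case True
  then have "P1 = 0" "P0 = 0" using assms by linarith+
  then show ?thesis using assms by simp
next
  case False
  then have pos: "P1 + P0 > 0" using assms by linarith
  obtain p where p: "p = P1 + P0" by blast
  then have P0e: "P0 = p - P1" by simp
  have "p > 0" using pos p by simp
  have pp: "P1 + (p - P1) = p" by simp
  show ?thesis using \<open>0 < p\<close> unfolding P0e add.commute[of P1 "p - P1"] diff_add_cancel
    by (simp add: field_simps)
qed

lemma pern5:
  fixes P1 P0 S1 S0 Ylo Yhi :: real
  assumes "P1 \<ge> 0" "P0 \<ge> 0" "P1 = 0 \<Longrightarrow> S1 = 0" "P0 = 0 \<Longrightarrow> S0 = 0"
  shows "(1 - P1/(P1+P0)) * (P1+P0) = P0"
proof (cases "P1 + P0 = 0")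
  case True
  then have "P1 = 0" "P0 = 0" using assms by linarith+
  then show ?thesis using assms by simp
next
  case False
  then have pos: "P1 + P0 > 0" using assms by linarith
  obtain p where p: "p = P1 + P0" by blast
  then have P0e: "P0 = p - P1" by simp
  have "p > 0" using pos p by simp
  have pp: "P1 + (p - P1) = p" by simp
  show ?thesis using \<open>0 < p\<close> unfolding P0e add.commute[of P1 "p - P1"] diff_add_cancel
    by (simp add: field_simps)
qed

lemma pern6:
  fixes P1 P0 S1 S0 Ylo Yhi :: real
  assumes "P1 \<ge> 0" "P0 \<ge> 0" "P1 = 0 \<Longrightarrow> S1 = 0" "P0 = 0 \<Longrightarrow> S0 = 0"
  shows "min ((S1+S0)/(P1+P0) - Ylo*(1-P1/(P1+P0))) (Yhi*(P1/(P1+P0))) * (P1+P0) = min (S1+S0 - Ylo*P0) (Yhi*P1)"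
proof (cases "P1 + P0 = 0")
  case True
  then have "P1 = 0" "P0 = 0" using assms by linarith+
  then show ?thesis using assms by simp
next
  case False
  then have pos: "P1 + P0 > 0" using assms by linarith
  obtain p where p: "p = P1 + P0" by blast
  then have P0e: "P0 = p - P1" by simp
  have "p > 0" using pos p by simp
  have pp: "P1 + (p - P1) = p" by simp
  show ?thesis using \<open>0 < p\<close> unfolding P0e add.commute[of P1 "p - P1"] diff_add_cancel
    apply (subst min_mult_pos[OF \<open>0 < p\<close>])
    apply (rule arg_cong2[where f=min])
    apply (simp_all add: field_simps)
    done
qed

lemma pern7:
  fixes P1 P0 S1 S0 Ylo Yhi :: real
  assumes "P1 \<ge> 0" "P0 \<ge> 0" "P1 = 0 \<Longrightarrow> S1 = 0" "P0 = 0 \<Longrightarrow> S0 = 0"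
  shows "min ((S1+S0)/(P1+P0) - Ylo*(P1/(P1+P0))) (Yhi*(1-P1/(P1+P0))) * (P1+P0) = min (S1+S0 - Ylo*P1) (Yhi*P0)"
proof (cases "P1 + P0 = 0")
  case True
  then have "P1 = 0" "P0 = 0" using assms by linarith+
  then show ?thesis using assms by simp
next
  case False
  then have pos: "P1 + P0 > 0" using assms by linarith
  obtain p where p: "p = P1 + P0" by blast
  then have P0e: "P0 = p - P1" by simp
  have "p > 0" using pos p by simp
  have pp: "P1 + (p - P1) = p" by simp
  show ?thesis using \<open>0 < p\<close> unfolding P0e add.commute[of P1 "p - P1"] diff_add_cancel
    apply (subst min_mult_pos[OF \<open>0 < p\<close>])
    apply (rule arg_cong2[where f=min])
    apply (simp_all add: field_simps)
    done
qed

lemmas pern = pern1 pern2 pern3 pern4 pern5 pern6 pern7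

locale cellsys = prob_space M for M :: "'a measure" +
  fixes X Y :: "'a \<Rightarrow> real" and N :: "'a \<Rightarrow> 'n::finite"
  assumes Xm[measurable]: "X \<in> borel_measurable M"
    and X01: "\<And>\<omega>. \<omega> \<in> space M \<Longrightarrow> X \<omega> = 0 \<or> X \<omega> = 1"
    and Yi: "integrable M Y"
    and Nm[measurable]: "N \<in> measurable M (count_space UNIV)"
begin

abbreviation "P1 \<equiv> cP M X N 1"
abbreviation "P0 \<equiv> cP M X N 0"
abbreviation "S1 \<equiv> cS M X Y N 1"
abbreviation "S0 \<equiv> cS M X Y N 0"
lemmas P1_def = cP_def[of M X N 1] and P0_def = cP_def[of M X N 0]
   and S1_def = cS_def[of M X Y N 1] and S0_def = cS_def[of M X Y N 0]

lemma sets_E[measurable]: "evXN M X N x n \<in> sets M"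
  unfolding evXN_def by measurable

lemma sets_evN[measurable]: "evN M N n \<in> sets M"
  unfolding evN_def by measurable

lemma sets_evX[measurable]: "evX M X x \<in> sets M"
  unfolding evX_def by measurable

lemma indE: "\<omega> \<in> space M \<Longrightarrow> indicator (evXN M X N x n) \<omega> = (if X \<omega> = x \<and> N \<omega> = n then 1 else (0::real))"
  by (simp add: evXN_def indicator_def)

lemma indN: "\<omega> \<in> space M \<Longrightarrow> indicator (evN M N n) \<omega> = (if N \<omega> = n then 1 else (0::real))"
  by (simp add: evN_def indicator_def)

lemma indX: "\<omega> \<in> space M \<Longrightarrow> indicator (evX M X x) \<omega> = (if X \<omega> = x then 1 else (0::real))"
  by (simp add: evX_def indicator_def)

lemma intE_Y: "integrable M (\<lambda>\<omega>. indicator (evXN M X N x n) \<omega> * Y \<omega>)"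
  using integrable_real_mult_indicator[OF sets_E Yi] by (simp add: mult.commute)

lemma intE: "integrable M (\<lambda>\<omega>. c * indicator (evXN M X N x n) \<omega> :: real)"
  by (intro integrable_mult_right integrable_real_indicator) (simp_all add: emeasure_finite less_top[symmetric])

lemma intE': "integrable M (indicator (evXN M X N x n) :: _ \<Rightarrow> real)"
  using intE[of 1] by simp
lemma Eint[simp]: "evXN M X N x n \<inter> space M = evXN M X N x n"
  by (simp add: evXN_def Int_absorb2 subset_iff)
lemma P1_int: "(\<integral>\<omega>. c * indicator (evXN M X N 1 n) \<omega> \<partial>M) = c * P1 n"
  by (simp add: P1_def)
lemma P0_int: "(\<integral>\<omega>. c * indicator (evXN M X N 0 n) \<omega> \<partial>M) = c * P0 n"
  by (simp add: P0_def)

lemma if01: "(if P then 1 else 0) * (a::real) = (if P then a else 0)" "a * (if P then 1 else 0) = (if P then a else 0)"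
  by auto

lemma ptY: "\<omega> \<in> space M \<Longrightarrow> Y \<omega> = (\<Sum>n\<in>UNIV. indicator (evXN M X N 1 n) \<omega> * Y \<omega> + indicator (evXN M X N 0 n) \<omega> * Y \<omega>)"
  using X01[of \<omega>] by (auto simp: indE sum.distrib if01 sum.delta')

lemma ptX: "\<omega> \<in> space M \<Longrightarrow> X \<omega> = (\<Sum>n\<in>UNIV. 1 * indicator (evXN M X N 1 n) \<omega>)"
  using X01[of \<omega>] by (auto simp: indE if01 sum.delta')

lemma ptXY: "\<omega> \<in> space M \<Longrightarrow> X \<omega> * Y \<omega> = (\<Sum>n\<in>UNIV. indicator (evXN M X N 1 n) \<omega> * Y \<omega>)"
  using X01[of \<omega>] by (auto simp: indE if01 sum.delta')

lemma pth: fixes h :: "'n \<Rightarrow> real" shows "\<omega> \<in> space M \<Longrightarrow> h (N \<omega>) = (\<Sum>n\<in>UNIV. h n * indicator (evXN M X N 1 n) \<omega> + h n * indicator (evXN M X N 0 n) \<omega>)"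
  using X01[of \<omega>] by (auto simp: indE sum.distrib if01 sum.delta')

lemma int_sum2: fixes f g :: "'n \<Rightarrow> 'a \<Rightarrow> real"
  assumes "\<And>n. integrable M (f n)" "\<And>n. integrable M (g n)"
  shows "(\<integral>\<omega>. (\<Sum>n\<in>UNIV. f n \<omega> + g n \<omega>) \<partial>M) = (\<Sum>n\<in>UNIV. (\<integral>\<omega>. f n \<omega> \<partial>M) + (\<integral>\<omega>. g n \<omega> \<partial>M))"
proof -
  have "(\<integral>\<omega>. (\<Sum>n\<in>UNIV. f n \<omega> + g n \<omega>) \<partial>M) = (\<Sum>n\<in>UNIV. (\<integral>\<omega>. f n \<omega> + g n \<omega> \<partial>M))"
    by (rule Bochner_Integration.integral_sum) (use assms in auto)
  also have "\<dots> = (\<Sum>n\<in>UNIV. (\<integral>\<omega>. f n \<omega> \<partial>M) + (\<integral>\<omega>. g n \<omega> \<partial>M))"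
    by (rule sum.cong[OF refl], rule Bochner_Integration.integral_add, rule assms, rule assms)
  finally show ?thesis .
qed

lemma int_sum1: fixes f :: "'n \<Rightarrow> 'a \<Rightarrow> real"
  assumes "\<And>n. integrable M (f n)"
  shows "(\<integral>\<omega>. (\<Sum>n\<in>UNIV. f n \<omega>) \<partial>M) = (\<Sum>n\<in>UNIV. (\<integral>\<omega>. f n \<omega> \<partial>M))"
  by (rule Bochner_Integration.integral_sum) (use assms in auto)

lemma int_Y: "(\<integral>\<omega>. Y \<omega> \<partial>M) = (\<Sum>n\<in>UNIV. S1 n + S0 n)"
proof -
  have "(\<integral>\<omega>. Y \<omega> \<partial>M) = (\<integral>\<omega>. (\<Sum>n\<in>UNIV. indicator (evXN M X N 1 n) \<omega> * Y \<omega> + indicator (evXN M X N 0 n) \<omega> * Y \<omega>) \<partial>M)"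
    by (rule Bochner_Integration.integral_cong[OF refl ptY])
  also have "\<dots> = (\<Sum>n\<in>UNIV. S1 n + S0 n)"
    by (subst int_sum2) (simp_all only: intE_Y S1_def S0_def)
  finally show ?thesis .
qed


lemma int_ind: "A \<in> sets M \<Longrightarrow> (\<integral>\<omega>. indicator A \<omega> \<partial>M) = measure M A"
  by (simp add: Int_absorb2 sets.sets_into_space)

lemma int_X: "integrable M X" "(\<integral>\<omega>. X \<omega> \<partial>M) = (\<Sum>n\<in>UNIV. P1 n)"
proof -
  have e: "(\<And>\<omega>. \<omega> \<in> space M \<Longrightarrow> X \<omega> = (\<Sum>n\<in>UNIV. 1 * indicator (evXN M X N 1 n) \<omega>))"
    by (rule ptX)
  have "integrable M (\<lambda>\<omega>. (\<Sum>n\<in>UNIV. 1 * indicator (evXN M X N 1 n) \<omega>) :: real)"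
    by (rule Bochner_Integration.integrable_sum, rule intE)
  moreover have "integrable M X \<longleftrightarrow> integrable M (\<lambda>\<omega>. (\<Sum>n\<in>UNIV. 1 * indicator (evXN M X N 1 n) \<omega>) :: real)"
    by (rule Bochner_Integration.integrable_cong[OF refl]) (rule e)
  ultimately show "integrable M X" by simp
  have "(\<integral>\<omega>. X \<omega> \<partial>M) = (\<integral>\<omega>. (\<Sum>n\<in>UNIV. 1 * indicator (evXN M X N 1 n) \<omega>) \<partial>M)"
    by (rule Bochner_Integration.integral_cong[OF refl e])
  also have "\<dots> = (\<Sum>n\<in>UNIV. P1 n)"
    by (subst int_sum1) (simp_all add: intE intE' P1_def)
  finally show "(\<integral>\<omega>. X \<omega> \<partial>M) = (\<Sum>n\<in>UNIV. P1 n)" .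
qed

lemma int_h: fixes h :: "'n \<Rightarrow> real" shows "(\<integral>\<omega>. h (N \<omega>) \<partial>M) = (\<Sum>n\<in>UNIV. h n * (P1 n + P0 n))"
proof -
  have "(\<integral>\<omega>. h (N \<omega>) \<partial>M) = (\<integral>\<omega>. (\<Sum>n\<in>UNIV. h n * indicator (evXN M X N 1 n) \<omega> + h n * indicator (evXN M X N 0 n) \<omega>) \<partial>M)"
    by (rule Bochner_Integration.integral_cong[OF refl pth])
  also have "\<dots> = (\<Sum>n\<in>UNIV. h n * (P1 n + P0 n))"
    by (subst int_sum2) (simp_all only: intE P1_int P0_int distrib_left)
  finally show ?thesis .
qed

lemma sum_P: "(\<Sum>n\<in>UNIV. P1 n + P0 n) = 1"
  using int_h[of "\<lambda>_. 1"] by (simp add: prob_space)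

lemma P_nonneg: "P1 n \<ge> 0" "P0 n \<ge> 0"
  by (simp_all add: cP_def)

lemma S_zero: assumes "cP M X N x n = 0" shows "cS M X Y N x n = 0"
proof -
  have "evXN M X N x n \<in> null_sets M"
    using assms by (simp add: cP_def emeasure_eq_measure null_sets_def)
  then have "AE \<omega> in M. \<omega> \<notin> evXN M X N x n" by (rule AE_not_in)
  then have "(\<integral>\<omega>. indicator (evXN M X N x n) \<omega> * Y \<omega> \<partial>M) = (\<integral>\<omega>. 0 \<partial>M)"
    by (intro integral_cong_AE borel_measurable_integrable[OF intE_Y]) (auto simp: indicator_def)
  then show ?thesis by (simp add: cS_def)
qed

lemma int_evN: "(\<integral>\<omega>. indicator (evN M N n) \<omega> * X \<omega> \<partial>M) = P1 n"
   "(\<integral>\<omega>. indicator (evN M N n) \<omega> * Y \<omega> \<partial>M) = S1 n + S0 n"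
   "(\<integral>\<omega>. indicator (evN M N n) \<omega> * (X \<omega> * Y \<omega>) \<partial>M) = S1 n"
   "measure M (evN M N n) = P1 n + P0 n"
proof -
  have "(\<integral>\<omega>. indicator (evN M N n) \<omega> * X \<omega> \<partial>M) = (\<integral>\<omega>. 1 * indicator (evXN M X N 1 n) \<omega> \<partial>M)"
    by (rule Bochner_Integration.integral_cong[OF refl]) (use X01 in \<open>auto simp: indE indN\<close>)
  then show "(\<integral>\<omega>. indicator (evN M N n) \<omega> * X \<omega> \<partial>M) = P1 n" by (simp add: P1_def)
  have "(\<integral>\<omega>. indicator (evN M N n) \<omega> * Y \<omega> \<partial>M) = (\<integral>\<omega>. indicator (evXN M X N 1 n) \<omega> * Y \<omega> + indicator (evXN M X N 0 n) \<omega> * Y \<omega> \<partial>M)"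
    by (rule Bochner_Integration.integral_cong[OF refl]) (use X01 in \<open>auto simp: indE indN\<close>)
  also have "\<dots> = S1 n + S0 n"
    by (subst Bochner_Integration.integral_add) (simp_all only: intE_Y S1_def S0_def)
  finally show "(\<integral>\<omega>. indicator (evN M N n) \<omega> * Y \<omega> \<partial>M) = S1 n + S0 n" .
  have "(\<integral>\<omega>. indicator (evN M N n) \<omega> * (X \<omega> * Y \<omega>) \<partial>M) = (\<integral>\<omega>. indicator (evXN M X N 1 n) \<omega> * Y \<omega> \<partial>M)"
    by (rule Bochner_Integration.integral_cong[OF refl]) (use X01 in \<open>auto simp: indE indN\<close>)
  then show "(\<integral>\<omega>. indicator (evN M N n) \<omega> * (X \<omega> * Y \<omega>) \<partial>M) = S1 n" by (simp add: S1_def)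
  have "measure M (evN M N n) = (\<integral>\<omega>. indicator (evN M N n) \<omega> \<partial>M)" by (simp add: int_ind)
  also have "\<dots> = (\<integral>\<omega>. 1 * indicator (evXN M X N 1 n) \<omega> + 1 * indicator (evXN M X N 0 n) \<omega> \<partial>M)"
    by (rule Bochner_Integration.integral_cong[OF refl]) (use X01 in \<open>auto simp: indE indN\<close>)
  also have "\<dots> = P1 n + P0 n"
    by (subst Bochner_Integration.integral_add) (simp_all add: intE intE' P1_def P0_def)
  finally show "measure M (evN M N n) = P1 n + P0 n" .
qed

lemma int_evX: "(\<integral>\<omega>. indicator (evX M X 1) \<omega> * Y \<omega> \<partial>M) = (\<Sum>n\<in>UNIV. S1 n)"
   "(\<integral>\<omega>. indicator (evX M X 0) \<omega> * Y \<omega> \<partial>M) = (\<Sum>n\<in>UNIV. S0 n)"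
   "measure M (evX M X 1) = (\<Sum>n\<in>UNIV. P1 n)"
   "measure M (evX M X 0) = (\<Sum>n\<in>UNIV. P0 n)"
proof -
  have "(\<integral>\<omega>. indicator (evX M X 1) \<omega> * Y \<omega> \<partial>M) = (\<integral>\<omega>. (\<Sum>n\<in>UNIV. indicator (evXN M X N 1 n) \<omega> * Y \<omega>) \<partial>M)"
    by (rule Bochner_Integration.integral_cong[OF refl]) (use X01 in \<open>auto simp: indE indX if01 sum.delta'\<close>)
  also have "\<dots> = (\<Sum>n\<in>UNIV. S1 n)"
    by (subst int_sum1) (simp_all only: intE_Y S1_def[symmetric])
  finally show "(\<integral>\<omega>. indicator (evX M X 1) \<omega> * Y \<omega> \<partial>M) = (\<Sum>n\<in>UNIV. S1 n)" .
  have "(\<integral>\<omega>. indicator (evX M X 0) \<omega> * Y \<omega> \<partial>M) = (\<integral>\<omega>. (\<Sum>n\<in>UNIV. indicator (evXN M X N 0 n) \<omega> * Y \<omega>) \<partial>M)"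
    by (rule Bochner_Integration.integral_cong[OF refl]) (use X01 in \<open>auto simp: indE indX if01 sum.delta'\<close>)
  also have "\<dots> = (\<Sum>n\<in>UNIV. S0 n)"
    by (subst int_sum1) (simp_all only: intE_Y S0_def[symmetric])
  finally show "(\<integral>\<omega>. indicator (evX M X 0) \<omega> * Y \<omega> \<partial>M) = (\<Sum>n\<in>UNIV. S0 n)" .
  have "measure M (evX M X 1) = (\<integral>\<omega>. indicator (evX M X 1) \<omega> \<partial>M)" by (simp add: int_ind)
  also have "\<dots> = (\<integral>\<omega>. (\<Sum>n\<in>UNIV. 1 * indicator (evXN M X N 1 n) \<omega>) \<partial>M)"
    by (rule Bochner_Integration.integral_cong[OF refl]) (use X01 in \<open>auto simp: indE indX if01 sum.delta'\<close>)
  also have "\<dots> = (\<Sum>n\<in>UNIV. P1 n)"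
    by (subst int_sum1) (simp_all add: intE intE' P1_def)
  finally show "measure M (evX M X 1) = (\<Sum>n\<in>UNIV. P1 n)" .
  have "measure M (evX M X 0) = (\<integral>\<omega>. indicator (evX M X 0) \<omega> \<partial>M)" by (simp add: int_ind)
  also have "\<dots> = (\<integral>\<omega>. (\<Sum>n\<in>UNIV. 1 * indicator (evXN M X N 0 n) \<omega>) \<partial>M)"
    by (rule Bochner_Integration.integral_cong[OF refl]) (use X01 in \<open>auto simp: indE indX if01 sum.delta'\<close>)
  also have "\<dots> = (\<Sum>n\<in>UNIV. P0 n)"
    by (subst int_sum1) (simp_all add: intE intE' P0_def)
  finally show "measure M (evX M X 0) = (\<Sum>n\<in>UNIV. P0 n)" .
qed

lemma pN_eq: "pN M N n = P1 n + P0 n" by (simp add: pN_def int_evN)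
lemma condX: "condN M N X n = P1 n / (P1 n + P0 n)" by (simp add: condN_def cexp_def int_evN)
lemma condY: "condN M N Y n = (S1 n + S0 n) / (P1 n + P0 n)" by (simp add: condN_def cexp_def int_evN)
lemma condXY: "condN M N (\<lambda>\<omega>. X \<omega> * Y \<omega>) n = S1 n / (P1 n + P0 n)" by (simp add: condN_def cexp_def int_evN)
lemma EX_eq: "Expect M X = (\<Sum>n\<in>UNIV. P1 n)" by (simp add: Expect_def int_X)
lemma EY_eq: "Expect M Y = (\<Sum>n\<in>UNIV. S1 n + S0 n)" by (simp add: Expect_def int_Y)
lemma Var_eq: "Var M X = (\<Sum>n\<in>UNIV. P1 n) - (\<Sum>n\<in>UNIV. P1 n)^2"
proof -
  let ?E = "\<Sum>n\<in>UNIV. P1 n"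
  have "Var M X = (\<integral>\<omega>. X \<omega> * (1 - 2 * ?E) + ?E^2 \<partial>M)"
    unfolding Var_def EX_eq
    by (rule Bochner_Integration.integral_cong[OF refl]) (use X01 in \<open>auto simp: power2_eq_square algebra_simps\<close>)
  also have "\<dots> = (\<integral>\<omega>. X \<omega> * (1 - 2 * ?E) \<partial>M) + ?E^2"
    by (subst Bochner_Integration.integral_add) (auto intro: int_X simp: prob_space)
  also have "\<dots> = ?E * (1 - 2 * ?E) + ?E^2"
    by (simp add: int_X prob_space)
  finally show ?thesis by (simp add: power2_eq_square algebra_simps)
qed
lemma D_eq: "D M X Y = (\<Sum>n\<in>UNIV. S1 n) / (\<Sum>n\<in>UNIV. P1 n) - (\<Sum>n\<in>UNIV. S0 n) / (\<Sum>n\<in>UNIV. P0 n)"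
  by (simp add: D_def cexp_def int_evX)

lemma condRV_eq: "condRV M N Z = (\<lambda>\<omega>. condN M N Z (N \<omega>))"
  by (rule ext) (simp add: condRV_def)

lemma Eh: fixes h :: "'n \<Rightarrow> real" shows "Expect M (\<lambda>\<omega>. h (N \<omega>)) = (\<Sum>n\<in>UNIV. h n * (P1 n + P0 n))"
  by (simp add: Expect_def int_h)

lemma pern_i: "P1 n \<ge> 0" "P0 n \<ge> 0" "P1 n = 0 \<Longrightarrow> S1 n = 0" "P0 n = 0 \<Longrightarrow> S0 n = 0"
  using P_nonneg S_zero by auto

lemmas pern_n = pern1[OF pern_i] pern2[OF pern_i] pern3[OF pern_i] pern4[OF pern_i]
  pern5[OF pern_i] pern6[OF pern_i] pern7[OF pern_i]

lemma deltaB_eq: "deltaB M X Y N = (\<Sum>n\<in>UNIV. S1 n - P1 n * (S1 n + S0 n) / (P1 n + P0 n))"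
proof -
  have "deltaB M X Y N = (\<Sum>n\<in>UNIV. (condN M N (\<lambda>\<omega>. X \<omega> * Y \<omega>) n - condN M N X n * condN M N Y n) * (P1 n + P0 n))"
    unfolding deltaB_def condRV_eq by (rule Eh)
  also have "\<dots> = (\<Sum>n\<in>UNIV. S1 n - P1 n * (S1 n + S0 n) / (P1 n + P0 n))"
    by (rule sum.cong[OF refl]) (simp only: condX condY condXY pern_n)
  finally show ?thesis .
qed

lemma DNM_eq: "DNM M X Y N = (\<Sum>n\<in>UNIV. P1 n * (S1 n + S0 n) / (P1 n + P0 n)) / (\<Sum>n\<in>UNIV. P1 n)
   - (\<Sum>n\<in>UNIV. (S1 n + S0 n) - P1 n * (S1 n + S0 n) / (P1 n + P0 n)) / (\<Sum>n\<in>UNIV. P0 n)"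
proof -
  have 1: "Expect M (\<lambda>\<omega>. condRV M N X \<omega> * condRV M N Y \<omega>) = (\<Sum>n\<in>UNIV. P1 n * (S1 n + S0 n) / (P1 n + P0 n))"
    unfolding condRV_eq by (subst Eh, rule sum.cong[OF refl]) (simp only: condX condY pern_n)
  have 2: "Expect M (condRV M N X) = (\<Sum>n\<in>UNIV. P1 n)"
    unfolding condRV_eq by (subst Eh, rule sum.cong[OF refl]) (simp only: condX condY pern_n)
  have 3: "Expect M (\<lambda>\<omega>. (1 - condRV M N X \<omega>) * condRV M N Y \<omega>) = (\<Sum>n\<in>UNIV. (S1 n + S0 n) - P1 n * (S1 n + S0 n) / (P1 n + P0 n))"
    unfolding condRV_eq by (subst Eh, rule sum.cong[OF refl]) (simp only: condX condY pern_n)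
  have 4: "Expect M (\<lambda>\<omega>. 1 - condRV M N X \<omega>) = (\<Sum>n\<in>UNIV. P0 n)"
    unfolding condRV_eq by (subst Eh, rule sum.cong[OF refl]) (simp only: condX condY pern_n)
  show ?thesis unfolding DNM_def 1 2 3 4 ..
qed

lemma DMOBp_eq: "DMOBp M X Y N Ylo Yhi = ((\<Sum>n\<in>UNIV. min (S1 n + S0 n - Ylo * P0 n) (Yhi * P1 n))
      - (\<Sum>n\<in>UNIV. P1 n) * (\<Sum>n\<in>UNIV. S1 n + S0 n)) / ((\<Sum>n\<in>UNIV. P1 n) - (\<Sum>n\<in>UNIV. P1 n)^2)"
proof -
  have 1: "Expect M (\<lambda>\<omega>. min (condRV M N Y \<omega> - Ylo * (1 - condRV M N X \<omega>)) (Yhi * condRV M N X \<omega>))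
     = (\<Sum>n\<in>UNIV. min (S1 n + S0 n - Ylo * P0 n) (Yhi * P1 n))"
    unfolding condRV_eq by (subst Eh, rule sum.cong[OF refl]) (simp only: condX condY pern_n)
  show ?thesis unfolding DMOBp_def 1 Var_eq EX_eq EY_eq ..
qed

lemma DMOBm_eq: "DMOBm M X Y N Ylo Yhi = ((\<Sum>n\<in>UNIV. S1 n + S0 n) * (1 - (\<Sum>n\<in>UNIV. P1 n))
      - (\<Sum>n\<in>UNIV. min (S1 n + S0 n - Ylo * P1 n) (Yhi * P0 n))) / ((\<Sum>n\<in>UNIV. P1 n) - (\<Sum>n\<in>UNIV. P1 n)^2)"
proof -
  have 1: "Expect M (\<lambda>\<omega>. min (condRV M N Y \<omega> - Ylo * condRV M N X \<omega>) (Yhi * (1 - condRV M N X \<omega>)))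
     = (\<Sum>n\<in>UNIV. min (S1 n + S0 n - Ylo * P1 n) (Yhi * P0 n))"
    unfolding condRV_eq by (subst Eh, rule sum.cong[OF refl]) (simp only: condX condY pern_n)
  show ?thesis unfolding DMOBm_def 1 Var_eq EX_eq EY_eq ..
qed


lemma cexp1: "cexp M Y (evXN M X N 1 n) = S1 n / P1 n" by (simp add: cexp_def cS_def cP_def)
lemma cexp0: "cexp M Y (evXN M X N 0 n) = S0 n / P0 n" by (simp add: cexp_def cS_def cP_def)

lemma bound_iff: "(P1 n > 0 \<longrightarrow> S1 n / P1 n \<in> {Ylo..Yhi}) \<longleftrightarrow> (Ylo * P1 n \<le> S1 n \<and> S1 n \<le> Yhi * P1 n)"
  "(P0 n > 0 \<longrightarrow> S0 n / P0 n \<in> {Ylo..Yhi}) \<longleftrightarrow> (Ylo * P0 n \<le> S0 n \<and> S0 n \<le> Yhi * P0 n)"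
proof -
  show "(P1 n > 0 \<longrightarrow> S1 n / P1 n \<in> {Ylo..Yhi}) \<longleftrightarrow> (Ylo * P1 n \<le> S1 n \<and> S1 n \<le> Yhi * P1 n)"
  proof (cases "P1 n = 0")
    case True then show ?thesis using S_zero[of 1 n] by simp
  next
    case False then have "P1 n > 0" using P_nonneg(1)[of n] by linarith
    then show ?thesis by (simp add: pos_le_divide_eq pos_divide_le_eq mult.commute)
  qed
  show "(P0 n > 0 \<longrightarrow> S0 n / P0 n \<in> {Ylo..Yhi}) \<longleftrightarrow> (Ylo * P0 n \<le> S0 n \<and> S0 n \<le> Yhi * P0 n)"
  proof (cases "P0 n = 0")
    case True then show ?thesis using S_zero[of 0 n] by simp
  next
    case False then have "P0 n > 0" using P_nonneg(2)[of n] by linarith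
    then show ?thesis by (simp add: pos_le_divide_eq pos_divide_le_eq mult.commute)
  qed
qed

lemma wit_iff: "(pN M N n > 0 \<and> 0 < condN M N X n \<and> condN M N X n < 1) \<longleftrightarrow> (P1 n > 0 \<and> P0 n > 0)"
proof -
  have a: "P1 n \<ge> 0" "P0 n \<ge> 0" by (rule P_nonneg)+
  show ?thesis
  proof
    assume h: "pN M N n > 0 \<and> 0 < condN M N X n \<and> condN M N X n < 1"
    then have p: "P1 n + P0 n > 0" by (simp add: pN_eq)
    from h have "0 < P1 n / (P1 n + P0 n)" "P1 n / (P1 n + P0 n) < 1" by (simp_all add: condX)
    then show "P1 n > 0 \<and> P0 n > 0" using p by (simp_all add: zero_less_divide_iff divide_less_eq)
  next
    assume h: "P1 n > 0 \<and> P0 n > 0"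
    then show "pN M N n > 0 \<and> 0 < condN M N X n \<and> condN M N X n < 1"
      by (simp add: pN_eq condX divide_less_eq)
  qed
qed

lemma standing_iff: "standing M X Y N Ylo Yhi \<longleftrightarrow>
   (\<exists>n. P1 n > 0 \<and> P0 n > 0) \<and> Ylo \<le> Yhi \<and>
   (\<forall>n. Ylo * P1 n \<le> S1 n \<and> S1 n \<le> Yhi * P1 n \<and> Ylo * P0 n \<le> S0 n \<and> S0 n \<le> Yhi * P0 n)"
proof -
  have base: "prob_space M \<and> X \<in> borel_measurable M \<and> (\<forall>\<omega>\<in>space M. X \<omega> \<in> {0,1}) \<and>
     integrable M Y \<and> N \<in> measurable M (count_space UNIV)"
    using X01 Yi prob_space_axioms by auto
  have bd: "(\<forall>x\<in>{0,1}. \<forall>n. measure M (evXN M X N x n) > 0 \<longrightarrow> cexp M Y (evXN M X N x n) \<in> {Ylo..Yhi})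
     \<longleftrightarrow> (\<forall>n. Ylo * P1 n \<le> S1 n \<and> S1 n \<le> Yhi * P1 n \<and> Ylo * P0 n \<le> S0 n \<and> S0 n \<le> Yhi * P0 n)"
    using bound_iff by (auto simp: cexp1 cexp0 cP_def[symmetric])
  show ?thesis unfolding standing_def using base bd wit_iff by auto
qed
end

lemma sum_prod_bool: "(\<Sum>x\<in>(UNIV :: ('n::finite \<times> bool) set). h x) = (\<Sum>n\<in>UNIV. h (n, True) + h (n, False))"
proof -
  have "(\<Sum>x\<in>(UNIV :: ('n \<times> bool) set). h x) = (\<Sum>x\<in>(UNIV \<times> UNIV :: ('n \<times> bool) set). h x)"
    by simp
  also have "\<dots> = (\<Sum>n\<in>UNIV. \<Sum>b\<in>UNIV. h (n, b))"
    by (subst sum.cartesian_product) simp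
  also have "\<dots> = (\<Sum>n\<in>UNIV. h (n, True) + h (n, False))"
    by (simp add: UNIV_bool add.commute)
  finally show ?thesis .
qed

lemma sum_ofbool: fixes n :: "'n::finite" shows "(\<Sum>m\<in>UNIV. of_bool (m = n) * x m * y m) = (y n * x n :: real)"
proof -
  have "(\<Sum>m\<in>UNIV. of_bool (m = n) * x m * y m) = (\<Sum>m\<in>UNIV. if n = m then x m * y m else 0)"
    by (rule sum.cong) auto
  also have "\<dots> = y n * x n" by (simp add: mult.commute)
  finally show ?thesis .
qed

lemma realize:
  fixes P1 P0 a b :: "'n::finite \<Rightarrow> real"
  assumes nn1: "\<And>n. P1 n \<ge> 0" and nn0: "\<And>n. P0 n \<ge> 0" and s1: "(\<Sum>n\<in>UNIV. P1 n + P0 n) = 1"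
  shows "\<exists>M' :: (real \<times> real \<times> 'n) measure. cellsys M' fst (fst \<circ> snd) (snd \<circ> snd) \<and>
     (\<forall>n. cP M' fst (snd \<circ> snd) 1 n = P1 n \<and> cP M' fst (snd \<circ> snd) 0 n = P0 n \<and>
          cS M' fst (fst \<circ> snd) (snd \<circ> snd) 1 n = P1 n * a n \<and> cS M' fst (fst \<circ> snd) (snd \<circ> snd) 0 n = P0 n * b n)"
proof -
  define f :: "'n \<times> bool \<Rightarrow> real" where "f = (\<lambda>(n, c). if c then P1 n else P0 n)"
  have fnn: "\<And>x. 0 \<le> f x" using nn1 nn0 by (auto simp: f_def)
  have fsum: "(\<Sum>x\<in>UNIV. f x) = 1" using s1 by (simp add: sum_prod_bool f_def)
  have fprob: "(\<integral>\<^sup>+x. f x \<partial>count_space UNIV) = 1"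
    using fnn fsum by (simp add: nn_integral_count_space_finite)
  define Q where "Q = embed_pmf f"
  have pQ: "pmf Q x = f x" for x unfolding Q_def by (rule pmf_embed_pmf[OF fnn fprob])
  define g :: "'n \<times> bool \<Rightarrow> real \<times> real \<times> 'n" where
    "g = (\<lambda>(n, c). if c then (1, a n, n) else (0, b n, n))"
  define S where "S = range g"
  define M' where "M' = distr (measure_pmf Q) (count_space S) g"
  have gm: "g \<in> measurable (measure_pmf Q) (count_space S)" by (simp add: S_def)
  have ps: "prob_space M'" unfolding M'_def
    by (rule prob_space.prob_space_distr[OF prob_space_measure_pmf gm])
  have spM: "space M' = S" by (simp add: M'_def)
  have setsM: "sets M' = Pow S" by (simp add: M'_def)
  have intM: "(\<integral>\<omega>. h \<omega> \<partial>M') = (\<Sum>n\<in>UNIV. h (1, a n, n) * P1 n + h (0, b n, n) * P0 n)" for h :: "real \<times> real \<times> 'n \<Rightarrow> real"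
  proof -
    have "(\<integral>\<omega>. h \<omega> \<partial>M') = (\<integral>x. h (g x) \<partial>measure_pmf Q)"
      unfolding M'_def by (rule integral_distr[OF gm]) simp
    also have "\<dots> = (\<Sum>x\<in>UNIV. h (g x) * pmf Q x)"
      by (rule integral_measure_pmf_real) auto
    also have "\<dots> = (\<Sum>n\<in>UNIV. h (1, a n, n) * P1 n + h (0, b n, n) * P0 n)"
      by (simp add: sum_prod_bool pQ f_def g_def)
    finally show ?thesis .
  qed
  have cs: "cellsys M' fst (fst \<circ> snd) (snd \<circ> snd)"
    unfolding cellsys_def cellsys_axioms_def
  proof (intro conjI ps)
    show "fst \<in> borel_measurable M'" by (simp add: M'_def)
    show "\<forall>\<omega>. \<omega> \<in> space M' \<longrightarrow> fst \<omega> = 0 \<or> fst \<omega> = 1"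
      by (auto simp: spM S_def g_def split: if_splits)
    show "integrable M' (fst \<circ> snd)" unfolding M'_def
      by (subst integrable_distr_eq[OF gm]) (auto intro: integrable_measure_pmf_finite)
    show "snd \<circ> snd \<in> measurable M' (count_space UNIV)" by (simp add: M'_def)
  qed
  have gin: "(1, a m, m) \<in> S" "(0, b m, m) \<in> S" for m
    unfolding S_def g_def by (auto simp: image_iff intro: bexI[where x="(m, True)"] bexI[where x="(m, False)"])
  have evsub: "evXN M' fst (snd \<circ> snd) x n \<subseteq> space M'" for x n by (auto simp: evXN_def)
  have mE: "measure M' (evXN M' fst (snd \<circ> snd) x n) = (\<integral>\<omega>. indicator (evXN M' fst (snd \<circ> snd) x n) \<omega> \<partial>M')" for x n
    using evsub by (simp add: Int_absorb2)
  show ?thesis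
  proof (intro exI conjI allI)
    show "cellsys M' fst (fst \<circ> snd) (snd \<circ> snd)" by (rule cs)
    fix n
    show "cP M' fst (snd \<circ> snd) 1 n = P1 n"
      unfolding cP_def mE intM by (simp add: evXN_def spM gin indicator_def)
    show "cP M' fst (snd \<circ> snd) 0 n = P0 n"
      unfolding cP_def mE intM by (simp add: evXN_def spM gin indicator_def)
    show "cS M' fst (fst \<circ> snd) (snd \<circ> snd) 1 n = P1 n * a n"
      unfolding cS_def intM by (simp add: evXN_def spM gin indicator_def sum_ofbool)
    show "cS M' fst (fst \<circ> snd) (snd \<circ> snd) 0 n = P0 n * b n"
      unfolding cS_def intM by (simp add: evXN_def spM gin indicator_def sum_ofbool)
  qed
qed


lemma pn_facts:
  fixes P1 P0 S1 S0 Ylo Yhi :: real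
  assumes h: "P1 \<ge> 0" "P0 \<ge> 0" "Ylo*P1 \<le> S1" "S1 \<le> Yhi*P1" "Ylo*P0 \<le> S0" "S0 \<le> Yhi*P0" "Ylo \<le> Yhi"
  shows "S1 \<le> min (S1+S0 - Ylo*P0) (Yhi*P1)" "S0 \<le> min (S1+S0 - Ylo*P1) (Yhi*P0)"
    "P1*(S1+S0)/(P1+P0) \<le> min (S1+S0 - Ylo*P0) (Yhi*P1)"
    "S1+S0 - P1*(S1+S0)/(P1+P0) \<le> min (S1+S0 - Ylo*P1) (Yhi*P0)"
    "Ylo*P1 \<le> P1*(S1+S0)/(P1+P0)" "P1*(S1+S0)/(P1+P0) \<le> Yhi*P1"
    "Ylo*P0 \<le> S1+S0 - P1*(S1+S0)/(P1+P0)" "S1+S0 - P1*(S1+S0)/(P1+P0) \<le> Yhi*P0"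
    "Ylo*P1 \<le> min (S1+S0 - Ylo*P0) (Yhi*P1)" "min (S1+S0 - Ylo*P0) (Yhi*P1) \<le> Yhi*P1"
    "Ylo*P0 \<le> S1+S0 - min (S1+S0 - Ylo*P0) (Yhi*P1)" "S1+S0 - min (S1+S0 - Ylo*P0) (Yhi*P1) \<le> Yhi*P0"
    "Ylo*P0 \<le> min (S1+S0 - Ylo*P1) (Yhi*P0)" "min (S1+S0 - Ylo*P1) (Yhi*P0) \<le> Yhi*P0"
    "Ylo*P1 \<le> S1+S0 - min (S1+S0 - Ylo*P1) (Yhi*P0)" "S1+S0 - min (S1+S0 - Ylo*P1) (Yhi*P0) \<le> Yhi*P1"
proof -
  have m1: "Ylo*P1 \<le> Yhi*P1" "Ylo*P0 \<le> Yhi*P0" using h by (simp_all add: mult_right_mono)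
  obtain c where c: "c = P1*(S1+S0)/(P1+P0)" by blast
  have cf: "Ylo*P1 \<le> c \<and> c \<le> Yhi*P1 \<and> Ylo*P0 \<le> S1+S0-c \<and> S1+S0-c \<le> Yhi*P0"
  proof (cases "P1 + P0 = 0")
    case True
    then have "P1 = 0" "P0 = 0" using h by linarith+
    then show ?thesis using h c by simp
  next
    case False
    then have pp: "P1 + P0 > 0" using h by linarith
    define r where "r = (S1+S0)/(P1+P0)"
    have "(P1+P0)*r = S1+S0" unfolding r_def using False by simp
    then have T: "S1 + S0 = P1*r + P0*r" by (simp add: algebra_simps)
    have ce: "c = P1 * r" using c False by (simp add: r_def)
    have "Ylo*(P1+P0) \<le> S1+S0" "S1+S0 \<le> Yhi*(P1+P0)" using h by (simp_all add: algebra_simps)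
    then have "Ylo \<le> r" "r \<le> Yhi" using pp by (simp_all add: r_def pos_le_divide_eq pos_divide_le_eq)
    then have "P1*Ylo \<le> P1*r" "P1*r \<le> P1*Yhi" "P0*Ylo \<le> P0*r" "P0*r \<le> P0*Yhi"
      using h by (simp_all add: mult_left_mono)
    then show ?thesis using T ce by (simp add: algebra_simps)
  qed
  show "S1 \<le> min (S1+S0 - Ylo*P0) (Yhi*P1)" "S0 \<le> min (S1+S0 - Ylo*P1) (Yhi*P0)"
    "Ylo*P1 \<le> min (S1+S0 - Ylo*P0) (Yhi*P1)" "min (S1+S0 - Ylo*P0) (Yhi*P1) \<le> Yhi*P1"
    "Ylo*P0 \<le> S1+S0 - min (S1+S0 - Ylo*P0) (Yhi*P1)" "S1+S0 - min (S1+S0 - Ylo*P0) (Yhi*P1) \<le> Yhi*P0"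
    "Ylo*P0 \<le> min (S1+S0 - Ylo*P1) (Yhi*P0)" "min (S1+S0 - Ylo*P1) (Yhi*P0) \<le> Yhi*P0"
    "Ylo*P1 \<le> S1+S0 - min (S1+S0 - Ylo*P1) (Yhi*P0)" "S1+S0 - min (S1+S0 - Ylo*P1) (Yhi*P0) \<le> Yhi*P1"
    using h m1 by (simp_all add: min_def)
  show "P1*(S1+S0)/(P1+P0) \<le> min (S1+S0 - Ylo*P0) (Yhi*P1)"
    "S1+S0 - P1*(S1+S0)/(P1+P0) \<le> min (S1+S0 - Ylo*P1) (Yhi*P0)"
    "Ylo*P1 \<le> P1*(S1+S0)/(P1+P0)" "P1*(S1+S0)/(P1+P0) \<le> Yhi*P1"
    "Ylo*P0 \<le> S1+S0 - P1*(S1+S0)/(P1+P0)" "S1+S0 - P1*(S1+S0)/(P1+P0) \<le> Yhi*P0"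
    using cf c by (simp_all add: min_def)
qed

lemma D_ident: fixes A B E :: real assumes "0 < E" "E < 1"
  shows "A/E - B/(1-E) = (A - E*(A+B))/(E - E^2)"
proof -
  have "E - E^2 = E*(1-E)" by (simp add: power2_eq_square algebra_simps)
  moreover have "1 - E \<noteq> 0" "E \<noteq> 0" using assms by auto
  ultimately show ?thesis by (simp add: field_simps)
qed

lemma abs_alg:
  fixes A B C E Mx Mn :: real
  assumes E: "0 < E" "E < 1" and h: "A \<le> Mx" "B \<le> Mn" "C \<le> Mx" "A + B - C \<le> Mn"
  shows "0 \<le> A - C \<Longrightarrow> C/E - (A+B-C)/(1-E) \<le> A/E - B/(1-E)"
    "A/E - B/(1-E) \<le> (Mx - E*(A+B))/(E - E^2)"
    "A - C \<le> 0 \<Longrightarrow> A/E - B/(1-E) \<le> C/E - (A+B-C)/(1-E)"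
    "((A+B)*(1-E) - Mn)/(E - E^2) \<le> A/E - B/(1-E)"
proof -
  have "E - E^2 = E*(1-E)" by (simp add: power2_eq_square algebra_simps)
  then have V: "E - E^2 > 0" using E by simp
  note i1 = D_ident[OF E, of A B] and i2 = D_ident[OF E, of C "A+B-C"]
  show "0 \<le> A - C \<Longrightarrow> C/E - (A+B-C)/(1-E) \<le> A/E - B/(1-E)"
    unfolding i1 i2 using V by (intro divide_right_mono) simp_all
  show "A - C \<le> 0 \<Longrightarrow> A/E - B/(1-E) \<le> C/E - (A+B-C)/(1-E)"
    unfolding i1 i2 using V by (intro divide_right_mono) simp_all
  show "A/E - B/(1-E) \<le> (Mx - E*(A+B))/(E - E^2)"
    unfolding i1 using V h by (intro divide_right_mono) simp_all
  show "((A+B)*(1-E) - Mn)/(E - E^2) \<le> A/E - B/(1-E)"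
    unfolding i1 using V h by (intro divide_right_mono) (simp_all add: algebra_simps)
qed

lemma abs_constr:
  fixes L U d :: real
  assumes "L \<le> d" "d \<le> U"
  shows "\<exists>t. 0 \<le> t \<and> t \<le> 1 \<and> (1 - t) * L + t * U = d"
proof (cases "L = U")
  case True
  then show ?thesis using assms by (intro exI[of _ 0]) auto
next
  case False
  then have "L < U" using assms by auto
  define t where "t = (d - L)/(U - L)"
  have "t*(U-L) = d - L" unfolding t_def using \<open>L < U\<close> by simp
  then have "(1 - t) * L + t * U = d" by (simp add: algebra_simps)
  moreover have "0 \<le> t" "t \<le> 1" unfolding t_def using \<open>L < U\<close> assms by (simp_all add: divide_le_eq_1)
  ultimately show ?thesis by blast
qed



lemma conv_bd: fixes a b x y t :: real
  assumes "a \<le> x" "x \<le> b" "a \<le> y" "y \<le> b" "0 \<le> t" "t \<le> 1"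
  shows "a \<le> (1-t)*x + t*y" "(1-t)*x + t*y \<le> b"
proof -
  have "(1-t)*a \<le> (1-t)*x" "t*a \<le> t*y" "(1-t)*x \<le> (1-t)*b" "t*y \<le> t*b"
    using assms by (simp_all add: mult_left_mono)
  then show "a \<le> (1-t)*x + t*y" "(1-t)*x + t*y \<le> b" by (simp_all add: algebra_simps)
qed

lemma lin_div0: fixes t x y V :: real
  shows "((1-t)*x + t*y)/V = (1-t)*(x/V) + t*(y/V)"
  by (cases "V = 0") (simp_all add: field_simps)

lemma lin_div: fixes t x y z V :: real
  shows "((1-t)*x + t*y - z)/V = (1-t)*((x - z)/V) + t*((y - z)/V)"
  by (cases "V = 0") (simp_all add: field_simps)

context cellsys
begin

lemma pnf:
  assumes st: "standing M X Y N Ylo Yhi"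
  shows "S1 n \<le> min (S1 n + S0 n - Ylo * P0 n) (Yhi * P1 n)" "S0 n \<le> min (S1 n + S0 n - Ylo * P1 n) (Yhi * P0 n)" "P1 n * (S1 n + S0 n) / (P1 n + P0 n) \<le> min (S1 n + S0 n - Ylo * P0 n) (Yhi * P1 n)" "S1 n + S0 n - P1 n * (S1 n + S0 n) / (P1 n + P0 n) \<le> min (S1 n + S0 n - Ylo * P1 n) (Yhi * P0 n)"
    "Ylo*P1 n \<le> P1 n * (S1 n + S0 n) / (P1 n + P0 n)" "P1 n * (S1 n + S0 n) / (P1 n + P0 n) \<le> Yhi*P1 n" "Ylo*P0 n \<le> S1 n + S0 n - P1 n * (S1 n + S0 n) / (P1 n + P0 n)" "S1 n + S0 n - P1 n * (S1 n + S0 n) / (P1 n + P0 n) \<le> Yhi*P0 n"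
    "Ylo*P1 n \<le> min (S1 n + S0 n - Ylo * P0 n) (Yhi * P1 n)" "min (S1 n + S0 n - Ylo * P0 n) (Yhi * P1 n) \<le> Yhi*P1 n" "Ylo*P0 n \<le> S1 n + S0 n - min (S1 n + S0 n - Ylo * P0 n) (Yhi * P1 n)" "S1 n + S0 n - min (S1 n + S0 n - Ylo * P0 n) (Yhi * P1 n) \<le> Yhi*P0 n"
    "Ylo*P0 n \<le> min (S1 n + S0 n - Ylo * P1 n) (Yhi * P0 n)" "min (S1 n + S0 n - Ylo * P1 n) (Yhi * P0 n) \<le> Yhi*P0 n" "Ylo*P1 n \<le> S1 n + S0 n - min (S1 n + S0 n - Ylo * P1 n) (Yhi * P0 n)" "S1 n + S0 n - min (S1 n + S0 n - Ylo * P1 n) (Yhi * P0 n) \<le> Yhi*P1 n"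
proof -
  have h: "Ylo*P1 n \<le> S1 n" "S1 n \<le> Yhi*P1 n" "Ylo*P0 n \<le> S0 n" "S0 n \<le> Yhi*P0 n" "Ylo \<le> Yhi"
    using st standing_iff by auto
  note f = pn_facts[OF P_nonneg(1)[of n] P_nonneg(2)[of n] h]
  show "S1 n \<le> min (S1 n + S0 n - Ylo * P0 n) (Yhi * P1 n)" "S0 n \<le> min (S1 n + S0 n - Ylo * P1 n) (Yhi * P0 n)" "P1 n * (S1 n + S0 n) / (P1 n + P0 n) \<le> min (S1 n + S0 n - Ylo * P0 n) (Yhi * P1 n)" "S1 n + S0 n - P1 n * (S1 n + S0 n) / (P1 n + P0 n) \<le> min (S1 n + S0 n - Ylo * P1 n) (Yhi * P0 n)"
    "Ylo*P1 n \<le> P1 n * (S1 n + S0 n) / (P1 n + P0 n)" "P1 n * (S1 n + S0 n) / (P1 n + P0 n) \<le> Yhi*P1 n" "Ylo*P0 n \<le> S1 n + S0 n - P1 n * (S1 n + S0 n) / (P1 n + P0 n)" "S1 n + S0 n - P1 n * (S1 n + S0 n) / (P1 n + P0 n) \<le> Yhi*P0 n"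
    "Ylo*P1 n \<le> min (S1 n + S0 n - Ylo * P0 n) (Yhi * P1 n)" "min (S1 n + S0 n - Ylo * P0 n) (Yhi * P1 n) \<le> Yhi*P1 n" "Ylo*P0 n \<le> S1 n + S0 n - min (S1 n + S0 n - Ylo * P0 n) (Yhi * P1 n)" "S1 n + S0 n - min (S1 n + S0 n - Ylo * P0 n) (Yhi * P1 n) \<le> Yhi*P0 n"
    "Ylo*P0 n \<le> min (S1 n + S0 n - Ylo * P1 n) (Yhi * P0 n)" "min (S1 n + S0 n - Ylo * P1 n) (Yhi * P0 n) \<le> Yhi*P0 n" "Ylo*P1 n \<le> S1 n + S0 n - min (S1 n + S0 n - Ylo * P1 n) (Yhi * P0 n)" "S1 n + S0 n - min (S1 n + S0 n - Ylo * P1 n) (Yhi * P0 n) \<le> Yhi*P1 n"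
    by (fact f)+
qed

lemma E_facts:
  assumes st: "standing M X Y N Ylo Yhi"
  shows "0 < (\<Sum>n\<in>UNIV. P1 n)" "(\<Sum>n\<in>UNIV. P1 n) < 1" "(\<Sum>n\<in>UNIV. P0 n) = 1 - (\<Sum>n\<in>UNIV. P1 n)"
proof -
  obtain n0 where n0: "P1 n0 > 0" "P0 n0 > 0" using st standing_iff by auto
  show e: "(\<Sum>n\<in>UNIV. P0 n) = 1 - (\<Sum>n\<in>UNIV. P1 n)" using sum_P by (simp add: sum.distrib)
  have "P1 n0 \<le> (\<Sum>n\<in>UNIV. P1 n)" by (rule member_le_sum) (simp_all add: P_nonneg)
  then show "0 < (\<Sum>n\<in>UNIV. P1 n)" using n0 by linarith
  have "P0 n0 \<le> (\<Sum>n\<in>UNIV. P0 n)" by (rule member_le_sum) (simp_all add: P_nonneg)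
  then show "(\<Sum>n\<in>UNIV. P1 n) < 1" using n0 e by linarith
qed

lemma sums_AB:
  "(\<Sum>n\<in>UNIV. (S1 n + S0 n) - (P1 n * (S1 n + S0 n) / (P1 n + P0 n))) = (\<Sum>n\<in>UNIV. S1 n) + (\<Sum>n\<in>UNIV. S0 n) - (\<Sum>n\<in>UNIV. (P1 n * (S1 n + S0 n) / (P1 n + P0 n)))"
  "(\<Sum>n\<in>UNIV. S1 n + S0 n) = (\<Sum>n\<in>UNIV. S1 n) + (\<Sum>n\<in>UNIV. S0 n)"
  "(\<Sum>n\<in>UNIV. S1 n - (P1 n * (S1 n + S0 n) / (P1 n + P0 n))) = (\<Sum>n\<in>UNIV. S1 n) - (\<Sum>n\<in>UNIV. (P1 n * (S1 n + S0 n) / (P1 n + P0 n)))"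
  by (simp_all add: sum_subtractf sum.distrib)

lemma main_ineq:
  assumes st: "standing M X Y N Ylo Yhi"
  shows "(deltaB M X Y N \<ge> 0 \<longrightarrow> D M X Y \<in> {DNM M X Y N .. DMOBp M X Y N Ylo Yhi})
       \<and> (deltaB M X Y N \<le> 0 \<longrightarrow> D M X Y \<in> {DMOBm M X Y N Ylo Yhi .. DNM M X Y N})"
proof -
  note E = E_facts[OF st]
  have A: "(\<Sum>n\<in>UNIV. S1 n) \<le> (\<Sum>n\<in>UNIV. min (S1 n + S0 n - Ylo * P0 n) (Yhi * P1 n))"
    by (rule sum_mono) (rule pnf[OF st])
  have B: "(\<Sum>n\<in>UNIV. S0 n) \<le> (\<Sum>n\<in>UNIV. min (S1 n + S0 n - Ylo * P1 n) (Yhi * P0 n))"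
    by (rule sum_mono) (rule pnf[OF st])
  have C: "(\<Sum>n\<in>UNIV. P1 n * (S1 n + S0 n) / (P1 n + P0 n)) \<le> (\<Sum>n\<in>UNIV. min (S1 n + S0 n - Ylo * P0 n) (Yhi * P1 n))"
    by (rule sum_mono) (rule pnf[OF st])
  have C2: "(\<Sum>n\<in>UNIV. S1 n + S0 n - P1 n * (S1 n + S0 n) / (P1 n + P0 n)) \<le> (\<Sum>n\<in>UNIV. min (S1 n + S0 n - Ylo * P1 n) (Yhi * P0 n))"
    by (rule sum_mono) (rule pnf[OF st])
  note aa = abs_alg[OF E(1) E(2) A B C C2[unfolded sums_AB]]
  show ?thesis
    unfolding deltaB_eq D_eq DNM_eq DMOBp_eq DMOBm_eq E(3) sums_AB
    using aa by auto
qed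


lemma constr_gen:
  assumes st: "standing M X Y N Ylo Yhi"
    and bs: "\<And>n. Ylo*P1 n \<le> s1 n \<and> s1 n \<le> Yhi*P1 n \<and> Ylo*P0 n \<le> s0 n \<and> s0 n \<le> Yhi*P0 n"
    and ss: "\<And>n. s1 n + s0 n = S1 n + S0 n"
  shows "\<exists>M'. standing M' fst (fst \<circ> snd) (snd \<circ> snd) Ylo Yhi
     \<and> same_obs M X Y N M' fst (fst \<circ> snd) (snd \<circ> snd)
     \<and> deltaB M' fst (fst \<circ> snd) (snd \<circ> snd) = (\<Sum>n\<in>UNIV. s1 n - P1 n * (S1 n + S0 n) / (P1 n + P0 n))
     \<and> D M' fst (fst \<circ> snd) = (\<Sum>n\<in>UNIV. s1 n) / (\<Sum>n\<in>UNIV. P1 n) - (\<Sum>n\<in>UNIV. s0 n) / (\<Sum>n\<in>UNIV. P0 n)"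
proof -
  obtain M' where cs: "cellsys M' fst (fst \<circ> snd) (snd \<circ> snd)"
    and vals: "\<forall>n. cP M' fst (snd \<circ> snd) 1 n = P1 n \<and> cP M' fst (snd \<circ> snd) 0 n = P0 n \<and>
          cS M' fst (fst \<circ> snd) (snd \<circ> snd) 1 n = P1 n * (s1 n / P1 n) \<and> cS M' fst (fst \<circ> snd) (snd \<circ> snd) 0 n = P0 n * (s0 n / P0 n)"
    using realize[OF P_nonneg(1) P_nonneg(2) sum_P, of "\<lambda>n. s1 n / P1 n" "\<lambda>n. s0 n / P0 n"] by blast
  interpret C: cellsys M' fst "fst \<circ> snd" "snd \<circ> snd" by (rule cs)
  have e1: "P1 n * (s1 n / P1 n) = s1 n" for n
  proof (cases "P1 n = 0")
    case True then show ?thesis using bs[of n] by simp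
  qed simp
  have e0: "P0 n * (s0 n / P0 n) = s0 n" for n
  proof (cases "P0 n = 0")
    case True then show ?thesis using bs[of n] by simp
  qed simp
  have v1[simp]: "cP M' fst (snd \<circ> snd) 1 n = P1 n" "cP M' fst (snd \<circ> snd) 0 n = P0 n"
     "cS M' fst (fst \<circ> snd) (snd \<circ> snd) 1 n = s1 n" "cS M' fst (fst \<circ> snd) (snd \<circ> snd) 0 n = s0 n" for n
    using vals e1 e0 by auto
  have ss': "\<And>n. s1 n + s0 n = S1 n + S0 n" by (rule ss)
  show ?thesis
  proof (intro exI conjI)
    show "standing M' fst (fst \<circ> snd) (snd \<circ> snd) Ylo Yhi"
      unfolding C.standing_iff using st standing_iff bs by simp
    show "same_obs M X Y N M' fst (fst \<circ> snd) (snd \<circ> snd)"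
      unfolding same_obs_def by (simp add: C.pN_eq pN_eq C.condX condX C.condY condY ss')
    show "deltaB M' fst (fst \<circ> snd) (snd \<circ> snd) = (\<Sum>n\<in>UNIV. s1 n - P1 n * (S1 n + S0 n) / (P1 n + P0 n))"
      unfolding C.deltaB_eq by (simp add: ss')
    show "D M' fst (fst \<circ> snd) = (\<Sum>n\<in>UNIV. s1 n) / (\<Sum>n\<in>UNIV. P1 n) - (\<Sum>n\<in>UNIV. s0 n) / (\<Sum>n\<in>UNIV. P0 n)"
      unfolding C.D_eq by simp
  qed
qed


lemma constr_p:
  assumes st: "standing M X Y N Ylo Yhi" and d: "DNM M X Y N \<le> d" "d \<le> DMOBp M X Y N Ylo Yhi"
  shows "\<exists>M'. standing M' fst (fst \<circ> snd) (snd \<circ> snd) Ylo Yhi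
     \<and> same_obs M X Y N M' fst (fst \<circ> snd) (snd \<circ> snd)
     \<and> deltaB M' fst (fst \<circ> snd) (snd \<circ> snd) \<ge> 0
     \<and> D M' fst (fst \<circ> snd) = d"
proof -
  note E = E_facts[OF st]
  define cc where "cc n = P1 n * (S1 n + S0 n) / (P1 n + P0 n)" for n
  define m1 where "m1 n = min (S1 n + S0 n - Ylo * P0 n) (Yhi * P1 n)" for n
  define EE where "EE = (\<Sum>n\<in>UNIV. P1 n)"
  define TT where "TT = (\<Sum>n\<in>UNIV. S1 n) + (\<Sum>n\<in>UNIV. S0 n)"
  have E1: "0 < EE" "EE < 1" using E by (simp_all add: EE_def)
  have sTc: "(\<Sum>n\<in>UNIV. S1 n + S0 n - cc n) = TT - (\<Sum>n\<in>UNIV. cc n)"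
    by (simp add: sum_subtractf sum.distrib TT_def)
  have dnm: "DNM M X Y N = ((\<Sum>n\<in>UNIV. cc n) - EE*TT)/(EE - EE^2)"
    unfolding DNM_eq E(3) sums_AB cc_def[symmetric] EE_def[symmetric] TT_def[symmetric]
    using D_ident[OF E1, of "(\<Sum>n\<in>UNIV. cc n)" "TT - (\<Sum>n\<in>UNIV. cc n)"] by (simp add: sTc)
  have dmp: "DMOBp M X Y N Ylo Yhi = ((\<Sum>n\<in>UNIV. m1 n) - EE*TT)/(EE - EE^2)"
    unfolding DMOBp_eq sums_AB m1_def[symmetric] EE_def[symmetric] TT_def[symmetric] ..
  obtain t where t: "0 \<le> t" "t \<le> 1" "(1-t) * DNM M X Y N + t * DMOBp M X Y N Ylo Yhi = d"
    using abs_constr[OF d] by blast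
  define s1 where "s1 n = (1-t)*cc n + t*m1 n" for n
  define s0 where "s0 n = S1 n + S0 n - s1 n" for n
  have s0': "s0 n = (1-t)*(S1 n + S0 n - cc n) + t*(S1 n + S0 n - m1 n)" for n
    by (simp add: s0_def s1_def algebra_simps)
  have bs: "Ylo*P1 n \<le> s1 n \<and> s1 n \<le> Yhi*P1 n \<and> Ylo*P0 n \<le> s0 n \<and> s0 n \<le> Yhi*P0 n" for n
    unfolding s0' s1_def cc_def m1_def using pnf[OF st, of n] conv_bd t(1,2) by blast
  have ss: "s1 n + s0 n = S1 n + S0 n" for n by (simp add: s0_def)
  obtain M' where M': "standing M' fst (fst \<circ> snd) (snd \<circ> snd) Ylo Yhi"
     "same_obs M X Y N M' fst (fst \<circ> snd) (snd \<circ> snd)"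
     "deltaB M' fst (fst \<circ> snd) (snd \<circ> snd) = (\<Sum>n\<in>UNIV. s1 n - cc n)"
     "D M' fst (fst \<circ> snd) = (\<Sum>n\<in>UNIV. s1 n) / (\<Sum>n\<in>UNIV. P1 n) - (\<Sum>n\<in>UNIV. s0 n) / (\<Sum>n\<in>UNIV. P0 n)"
    using constr_gen[OF st bs ss] unfolding cc_def by blast
  have sum_s1: "(\<Sum>n\<in>UNIV. s1 n) = (1-t)*(\<Sum>n\<in>UNIV. cc n) + t*(\<Sum>n\<in>UNIV. m1 n)"
    by (simp add: s1_def sum.distrib sum_distrib_left)
  have sum_s0: "(\<Sum>n\<in>UNIV. s0 n) = TT - (\<Sum>n\<in>UNIV. s1 n)"
    by (simp add: s0_def sum_subtractf sum.distrib TT_def)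
  have cm: "(\<Sum>n\<in>UNIV. cc n) \<le> (\<Sum>n\<in>UNIV. m1 n)"
    by (rule sum_mono) (unfold cc_def m1_def, rule pnf(3)[OF st])
  have "deltaB M' fst (fst \<circ> snd) (snd \<circ> snd) = t * ((\<Sum>n\<in>UNIV. m1 n) - (\<Sum>n\<in>UNIV. cc n))"
    unfolding M'(3) sum_subtractf sum_s1 by (simp add: algebra_simps)
  then have dB: "deltaB M' fst (fst \<circ> snd) (snd \<circ> snd) \<ge> 0" using t cm by simp
  have "D M' fst (fst \<circ> snd) = ((\<Sum>n\<in>UNIV. s1 n) - EE*TT)/(EE - EE^2)"
    unfolding M'(4) E(3) sum_s0 EE_def[symmetric]
    using D_ident[OF E1, of "(\<Sum>n\<in>UNIV. s1 n)" "TT - (\<Sum>n\<in>UNIV. s1 n)"] by simp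
  also have "\<dots> = d"
    unfolding sum_s1 lin_div dnm[symmetric] dmp[symmetric] using t(3) .
  finally show ?thesis using M' dB by blast
qed

lemma constr_m:
  assumes st: "standing M X Y N Ylo Yhi" and d: "DMOBm M X Y N Ylo Yhi \<le> d" "d \<le> DNM M X Y N"
  shows "\<exists>M'. standing M' fst (fst \<circ> snd) (snd \<circ> snd) Ylo Yhi
     \<and> same_obs M X Y N M' fst (fst \<circ> snd) (snd \<circ> snd)
     \<and> deltaB M' fst (fst \<circ> snd) (snd \<circ> snd) \<le> 0
     \<and> D M' fst (fst \<circ> snd) = d"
proof -
  note E = E_facts[OF st]
  define cc where "cc n = P1 n * (S1 n + S0 n) / (P1 n + P0 n)" for n
  define m0 where "m0 n = min (S1 n + S0 n - Ylo * P1 n) (Yhi * P0 n)" for n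
  define EE where "EE = (\<Sum>n\<in>UNIV. P1 n)"
  define TT where "TT = (\<Sum>n\<in>UNIV. S1 n) + (\<Sum>n\<in>UNIV. S0 n)"
  have E1: "0 < EE" "EE < 1" using E by (simp_all add: EE_def)
  have sTc: "(\<Sum>n\<in>UNIV. S1 n + S0 n - cc n) = TT - (\<Sum>n\<in>UNIV. cc n)"
    by (simp add: sum_subtractf sum.distrib TT_def)
  have dnm: "DNM M X Y N = (TT*(1-EE) - (TT - (\<Sum>n\<in>UNIV. cc n)))/(EE - EE^2)"
    unfolding DNM_eq E(3) sums_AB cc_def[symmetric] EE_def[symmetric] TT_def[symmetric]
    using D_ident[OF E1, of "(\<Sum>n\<in>UNIV. cc n)" "TT - (\<Sum>n\<in>UNIV. cc n)"] by (simp add: sTc algebra_simps)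
  have dmm: "DMOBm M X Y N Ylo Yhi = (TT*(1-EE) - (\<Sum>n\<in>UNIV. m0 n))/(EE - EE^2)"
    unfolding DMOBm_eq sums_AB m0_def[symmetric] EE_def[symmetric] TT_def[symmetric] ..
  obtain t where t: "0 \<le> t" "t \<le> 1" "(1-t) * DMOBm M X Y N Ylo Yhi + t * DNM M X Y N = d"
    using abs_constr[OF d] by blast
  define s0 where "s0 n = (1-t)*m0 n + t*(S1 n + S0 n - cc n)" for n
  define s1 where "s1 n = S1 n + S0 n - s0 n" for n
  have s1': "s1 n = (1-t)*(S1 n + S0 n - m0 n) + t*cc n" for n
    by (simp add: s0_def s1_def algebra_simps)
  have bs: "Ylo*P1 n \<le> s1 n \<and> s1 n \<le> Yhi*P1 n \<and> Ylo*P0 n \<le> s0 n \<and> s0 n \<le> Yhi*P0 n" for n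
    unfolding s1' s0_def cc_def m0_def using pnf[OF st, of n] conv_bd t(1,2) by blast
  have ss: "s1 n + s0 n = S1 n + S0 n" for n by (simp add: s1_def)
  obtain M' where M': "standing M' fst (fst \<circ> snd) (snd \<circ> snd) Ylo Yhi"
     "same_obs M X Y N M' fst (fst \<circ> snd) (snd \<circ> snd)"
     "deltaB M' fst (fst \<circ> snd) (snd \<circ> snd) = (\<Sum>n\<in>UNIV. s1 n - cc n)"
     "D M' fst (fst \<circ> snd) = (\<Sum>n\<in>UNIV. s1 n) / (\<Sum>n\<in>UNIV. P1 n) - (\<Sum>n\<in>UNIV. s0 n) / (\<Sum>n\<in>UNIV. P0 n)"
    using constr_gen[OF st bs ss] unfolding cc_def by blast
  have sum_s0: "(\<Sum>n\<in>UNIV. s0 n) = (1-t)*(\<Sum>n\<in>UNIV. m0 n) + t*(TT - (\<Sum>n\<in>UNIV. cc n))"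
    by (simp only: s0_def sum.distrib sum_distrib_left[symmetric] sTc)
  have sum_s1: "(\<Sum>n\<in>UNIV. s1 n) = TT - (\<Sum>n\<in>UNIV. s0 n)"
    by (simp add: s1_def sum_subtractf sum.distrib TT_def)
  have cm: "(\<Sum>n\<in>UNIV. S1 n + S0 n - cc n) \<le> (\<Sum>n\<in>UNIV. m0 n)"
    by (rule sum_mono) (unfold cc_def m0_def, rule pnf(4)[OF st])
  then have cm': "TT - (\<Sum>n\<in>UNIV. cc n) \<le> (\<Sum>n\<in>UNIV. m0 n)"
    by (simp add: sum_subtractf sum.distrib TT_def)
  have "deltaB M' fst (fst \<circ> snd) (snd \<circ> snd) = (1-t) * ((TT - (\<Sum>n\<in>UNIV. cc n)) - (\<Sum>n\<in>UNIV. m0 n))"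
    unfolding M'(3) sum_subtractf sum_s1 sum_s0 by (simp add: algebra_simps)
  then have dB: "deltaB M' fst (fst \<circ> snd) (snd \<circ> snd) \<le> 0" using t cm'
    by (simp add: mult_nonneg_nonpos)
  have "D M' fst (fst \<circ> snd) = (TT*(1-EE) - (\<Sum>n\<in>UNIV. s0 n))/(EE - EE^2)"
    unfolding M'(4) E(3) sum_s1 EE_def[symmetric]
    using D_ident[OF E1, of "TT - (\<Sum>n\<in>UNIV. s0 n)" "(\<Sum>n\<in>UNIV. s0 n)"] by (simp add: algebra_simps)
  also have "\<dots> = ((1-t)*(TT*(1-EE) - (\<Sum>n\<in>UNIV. m0 n)) + t*(TT*(1-EE) - (TT - (\<Sum>n\<in>UNIV. cc n))))/(EE - EE^2)"
    unfolding sum_s0 by (simp add: algebra_simps)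
  also have "\<dots> = d"
    unfolding lin_div0 dnm[symmetric] dmm[symmetric] using t(3) .
  finally show ?thesis using M' dB by blast
qed

end


theorem proposition7:
  fixes M :: "'a measure" and X Y :: "'a \<Rightarrow> real" and N :: "'a \<Rightarrow> 'n::finite"
    and Ylo Yhi :: real
  assumes "standing M X Y N Ylo Yhi"
  shows "(deltaB M X Y N \<ge> 0 \<longrightarrow> D M X Y \<in> {DNM M X Y N .. DMOBp M X Y N Ylo Yhi})
       \<and> (deltaB M X Y N \<le> 0 \<longrightarrow> D M X Y \<in> {DMOBm M X Y N Ylo Yhi .. DNM M X Y N})
       \<and> (\<forall>d \<in> {DNM M X Y N .. DMOBp M X Y N Ylo Yhi}.
            \<exists>M' :: (real \<times> real \<times> 'n) measure.
              standing M' fst (fst \<circ> snd) (snd \<circ> snd) Ylo Yhi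
              \<and> same_obs M X Y N M' fst (fst \<circ> snd) (snd \<circ> snd)
              \<and> deltaB M' fst (fst \<circ> snd) (snd \<circ> snd) \<ge> 0
              \<and> D M' fst (fst \<circ> snd) = d)
       \<and> (\<forall>d \<in> {DMOBm M X Y N Ylo Yhi .. DNM M X Y N}.
            \<exists>M' :: (real \<times> real \<times> 'n) measure.
              standing M' fst (fst \<circ> snd) (snd \<circ> snd) Ylo Yhi
              \<and> same_obs M X Y N M' fst (fst \<circ> snd) (snd \<circ> snd)
              \<and> deltaB M' fst (fst \<circ> snd) (snd \<circ> snd) \<le> 0
              \<and> D M' fst (fst \<circ> snd) = d)"
  proof -
  interpret cellsys M X Y N
    using assms unfolding standing_def cellsys_def cellsys_axioms_def by auto
  have m: "(deltaB M X Y N \<ge> 0 \<longrightarrow> D M X Y \<in> {DNM M X Y N .. DMOBp M X Y N Ylo Yhi})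
       \<and> (deltaB M X Y N \<le> 0 \<longrightarrow> D M X Y \<in> {DMOBm M X Y N Ylo Yhi .. DNM M X Y N})"
    by (rule main_ineq[OF assms])
  show ?thesis
  proof (intro conjI ballI)
    show "0 \<le> deltaB M X Y N \<longrightarrow> D M X Y \<in> {DNM M X Y N..DMOBp M X Y N Ylo Yhi}" using m by blast
    show "deltaB M X Y N \<le> 0 \<longrightarrow> D M X Y \<in> {DMOBm M X Y N Ylo Yhi..DNM M X Y N}" using m by blast
  next
    fix d assume "d \<in> {DNM M X Y N..DMOBp M X Y N Ylo Yhi}"
    then show "\<exists>M' :: (real \<times> real \<times> 'n) measure.
              standing M' fst (fst \<circ> snd) (snd \<circ> snd) Ylo Yhi
              \<and> same_obs M X Y N M' fst (fst \<circ> snd) (snd \<circ> snd)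
              \<and> deltaB M' fst (fst \<circ> snd) (snd \<circ> snd) \<ge> 0
              \<and> D M' fst (fst \<circ> snd) = d"
      using constr_p[OF assms] by auto
  next
    fix d assume "d \<in> {DMOBm M X Y N Ylo Yhi..DNM M X Y N}"
    then show "\<exists>M' :: (real \<times> real \<times> 'n) measure.
              standing M' fst (fst \<circ> snd) (snd \<circ> snd) Ylo Yhi
              \<and> same_obs M X Y N M' fst (fst \<circ> snd) (snd \<circ> snd)
              \<and> deltaB M' fst (fst \<circ> snd) (snd \<circ> snd) \<le> 0
              \<and> D M' fst (fst \<circ> snd) = d"
      using constr_m[OF assms] by auto
  qed
qed

end
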